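(* Let $\|\cdot\|$ be a norm on $\mathbb{R}^m$ with dual norm $\|\cdot\|_*$. Let $\mathbf{z}_i=(\mathbf{x}_i,y_i)\in\mathbb{R}^m$, $i=1,\ldots,N$, be observations with $\|\mathbf{z}_i\|\le R$ for all $i$, and let $\mathbf{Z}\in\mathbb{R}^{m\times N}$ be the matrix with columns $\mathbf{z}_i$. Let $\mathcal{B}\subseteq\mathbb{R}^{m-1}$, $\gamma_N>0$, and let $\hat{\boldsymbol{\beta}}$ be an optimal solution of $$\min_{\boldsymbol{\beta}}\ \|(-\boldsymbol{\beta},1)\|_*\quad\text{s.t.}\quad \|(-\boldsymbol{\beta},1)'\mathbf{Z}\|_1\le\gamma_N,\ \ \boldsymbol{\beta}\in\mathcal{B}.$$ Let $\boldsymbol{\beta}^*\in\mathbb{R}^{m-1}$ satisfy $\|\mathbf{Z}'(-\boldsymbol{\beta}^*,1)\|_1\le\gamma_N$ and $\boldsymbol{\beta}^*\in\mathcal{B}$. Define $$\mathcal{A}(\boldsymbol{\beta}^* )=\operatorname{cone}\{\mathbf{v}\in\mathbb{R}^m:\ \|(-\boldsymbol{\beta}^*,1)+\mathbf{v}\|_*\le\|(-\boldsymbol{\beta}^*,1)\|_*\}\cap\mathbb{S}^m,$$ and assume there is $\underline{\alpha}>0$ with $\inf_{\mathbf{v}\in\mathcal{A}(\boldsymbol{\beta}^* )}\mathbf{v}'\mathbf{Z}\mathbf{Z}'\mathbf{v}\ge\underline{\alpha}$. Then $$\|\hat{\boldsymbol{\beta}}-\boldsymbol{\beta}^*\|_2\le\frac{2R\gamma_N}{\underline{\alpha}}\Psi(\boldsymbol{\beta}^*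 ),\qquad \Psi(\boldsymbol{\beta}^* )=\sup_{\mathbf{v}\in\mathcal{A}(\boldsymbol{\beta}^* )}\|\mathbf{v}\|_*.$$
   Context: $\mathbb{S}^m$ denotes the unit Euclidean sphere in $\mathbb{R}^m$; $\operatorname{cone}(S)$ is the cone generated by $S$. The dual norm is $\|\boldsymbol{\theta}\|_*=\sup_{\|\mathbf{z}\|\le1}\boldsymbol{\theta}'\mathbf{z}$; $(-\boldsymbol{\beta},1)\in\mathbb{R}^m$ is $-\boldsymbol{\beta}$ with coordinate $1$ appended. *)

theory Defs
  imports "HOL-Analysis.Analysis"
begin

text \<open>R^m is modelled as real^('n option): coordinate None is the response y,
  coordinates Some j are the features x (so R^(m-1) = real^'n).\<close>

definition is_norm :: "(('a::real_vector) \<Rightarrow> real) \<Rightarrow> bool" where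
  "is_norm nrm \<longleftrightarrow>
     (\<forall>x. 0 \<le> nrm x) \<and> (\<forall>x. nrm x = 0 \<longleftrightarrow> x = 0) \<and>
     (\<forall>c x. nrm (c *\<^sub>R x) = \<bar>c\<bar> * nrm x) \<and>
     (\<forall>x y. nrm (x + y) \<le> nrm x + nrm y)"

definition dual_norm :: "(('a::real_inner) \<Rightarrow> real) \<Rightarrow> 'a \<Rightarrow> real" where
  "dual_norm nrm \<theta> = Sup {\<theta> \<bullet> z | z. nrm z \<le> 1}"

definition aug :: "real^('n::finite) \<Rightarrow> real^('n option)" where
  "aug \<beta> = (\<chi> i. case i of None \<Rightarrow> 1 | Some j \<Rightarrow> - (\<beta> $ j))"

text \<open>|| (-beta,1)' Z ||_1 with Z the matrix whose columns are z 0, ..., z (N-1).\<close>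
definition l1_resid :: "nat \<Rightarrow> (nat \<Rightarrow> real^('n::finite option)) \<Rightarrow> real^('n option) \<Rightarrow> real" where
  "l1_resid N z a = (\<Sum>i<N. \<bar>a \<bullet> z i\<bar>)"

definition gram_form :: "nat \<Rightarrow> (nat \<Rightarrow> real^('n::finite option)) \<Rightarrow> real^('n option) \<Rightarrow> real" where
  "gram_form N z v = (\<Sum>i<N. (v \<bullet> z i)^2)"

definition A_set :: "(real^('n::finite option) \<Rightarrow> real) \<Rightarrow> real^'n \<Rightarrow> (real^('n option)) set" where
  "A_set nrm \<beta> = cone hull {v. dual_norm nrm (aug \<beta> + v) \<le> dual_norm nrm (aug \<beta>)} \<inter> sphere 0 1"

definition Psi :: "(real^('n::finite option) \<Rightarrow> real) \<Rightarrow> real^'n \<Rightarrow> real" where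
  "Psi nrm \<beta> = Sup (dual_norm nrm ` A_set nrm \<beta>)"

end

theory Submission
  imports Defs
begin

lemma isn_zero: "is_norm nrm \<Longrightarrow> nrm 0 = 0" by (simp add: is_norm_def)
lemma isn_neg: "is_norm nrm \<Longrightarrow> nrm (- x) = nrm x"
  unfolding is_norm_def by (metis abs_minus_cancel abs_one mult_1 scaleR_minus1_left)

lemma isn_sum: assumes "is_norm nrm" "finite A"
  shows "nrm (\<Sum>i\<in>A. f i) \<le> (\<Sum>i\<in>A. nrm (f i))"
  using assms(2)
proof (induction A rule: finite_induct)
  case empty then show ?case using isn_zero[OF assms(1)] by simp
next
  case (insert x F)
  then show ?case using assms(1) unfolding is_norm_def
    by (smt (verit) sum.insert)
qed

lemma isn_upper:
  fixes nrm :: "'a::euclidean_space \<Rightarrow> real"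
  assumes "is_norm nrm"
  shows "nrm x \<le> norm x * (\<Sum>b\<in>Basis. nrm b)"
proof -
  have "nrm x = nrm (\<Sum>b\<in>Basis. (x \<bullet> b) *\<^sub>R b)" by (simp add: euclidean_representation)
  also have "\<dots> \<le> (\<Sum>b\<in>Basis. nrm ((x \<bullet> b) *\<^sub>R b))" by (rule isn_sum[OF assms]) simp
  also have "\<dots> = (\<Sum>b\<in>Basis. \<bar>x \<bullet> b\<bar> * nrm b)" using assms by (simp add: is_norm_def)
  also have "\<dots> \<le> (\<Sum>b\<in>Basis. norm x * nrm b)"
    apply (rule sum_mono) apply (rule mult_right_mono)
    using Basis_le_norm assms by (auto simp: is_norm_def)
  finally show ?thesis by (simp add: sum_distrib_left)
qed

lemma isn_lower:
  fixes nrm :: "'a::euclidean_space \<Rightarrow> real"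
  assumes n: "is_norm nrm"
  shows "\<exists>c>0. \<forall>x. c * norm x \<le> nrm x"
proof -
  define K where "K = (\<Sum>b\<in>Basis. nrm b)"
  have K0: "K \<ge> 0" unfolding K_def using n by (simp add: is_norm_def sum_nonneg)
  have lip: "K-lipschitz_on UNIV nrm"
  proof (rule lipschitz_onI)
    fix x y :: 'a
    have "nrm x \<le> nrm y + nrm (x - y)" using n unfolding is_norm_def by (metis add.commute diff_add_cancel)
    moreover have "nrm y \<le> nrm x + nrm (y - x)" using n unfolding is_norm_def by (metis add.commute diff_add_cancel)
    moreover have "nrm (y - x) = nrm (x - y)" using isn_neg[OF n, of "x - y"] by simp
    moreover have "nrm (x - y) \<le> K * dist x y" using isn_upper[OF n, of "x-y"] by (simp add: K_def dist_norm mult.commute)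
    ultimately show "dist (nrm x) (nrm y) \<le> K * dist x y" by (simp add: dist_real_def abs_le_iff)
  qed (rule K0)
  have "\<exists>x\<in>sphere (0::'a) 1. \<forall>y\<in>sphere 0 1. nrm x \<le> nrm y"
    apply (rule continuous_attains_inf)
    using lipschitz_on_continuous_on[OF lip] continuous_on_subset by auto
  then obtain x0 :: 'a where x0: "norm x0 = 1" "\<And>y. norm y = 1 \<Longrightarrow> nrm x0 \<le> nrm y" by auto
  have pos: "nrm x0 > 0" using n x0(1) unfolding is_norm_def
    by (metis less_eq_real_def norm_zero zero_neq_one)
  show ?thesis
  proof (intro exI[of _ "nrm x0"] conjI allI pos)
    fix x :: 'a
    show "nrm x0 * norm x \<le> nrm x"
    proof (cases "x = 0")
      case True then show ?thesis using isn_zero[OF n] by simp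
    next
      case False
      have "nrm x0 \<le> nrm (x /\<^sub>R norm x)" using x0(2) False by simp
      also have "\<dots> = nrm x / norm x" using n unfolding is_norm_def by (simp add: divide_inverse mult.commute)
      finally show ?thesis using False by (simp add: field_simps)
    qed
  qed
qed

lemma dn_props:
  fixes nrm :: "'a::euclidean_space \<Rightarrow> real"
  assumes n: "is_norm nrm"
  shows "\<exists>c>0. \<forall>\<theta>. dual_norm nrm \<theta> \<le> norm \<theta> / c \<and> 0 \<le> dual_norm nrm \<theta> \<and>
     (\<forall>z. \<bar>\<theta> \<bullet> z\<bar> \<le> dual_norm nrm \<theta> * nrm z)"
proof -
  obtain c where c: "c > 0" "\<And>x. c * norm x \<le> nrm x" using isn_lower[OF n] by blast
  have bdd: "bdd_above {\<theta> \<bullet> z | z. nrm z \<le> 1}" for \<theta> :: 'a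
  proof (rule bdd_aboveI)
    fix t assume "t \<in> {\<theta> \<bullet> z | z. nrm z \<le> 1}"
    then obtain z where z: "t = \<theta> \<bullet> z" "nrm z \<le> 1" by auto
    have "norm z \<le> 1 / c" using c z(2) by (smt (verit) mult.commute pos_le_divide_eq)
    have "t \<le> norm \<theta> * norm z" using z(1) Cauchy_Schwarz_ineq2 by (metis abs_le_iff norm_cauchy_schwarz)
    also have "\<dots> \<le> norm \<theta> * (1/c)" using mult_left_mono[OF \<open>norm z \<le> 1/c\<close>, of "norm \<theta>"] by simp
    finally show "t \<le> norm \<theta> / c" by simp
  qed
  have up: "nrm z \<le> 1 \<Longrightarrow> \<theta> \<bullet> z \<le> dual_norm nrm \<theta>" for \<theta> z :: 'a
    unfolding dual_norm_def by (rule cSup_upper[OF _ bdd]) auto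
  show ?thesis
  proof (intro exI[of _ c] conjI allI c(1))
    fix \<theta> :: 'a
    show "dual_norm nrm \<theta> \<le> norm \<theta> / c" unfolding dual_norm_def
    proof (rule cSup_least)
      show "{\<theta> \<bullet> z |z. nrm z \<le> 1} \<noteq> {}" using isn_zero[OF n] by (metis (mono_tags, lifting) empty_iff mem_Collect_eq order.refl zero_le_one)
    next
      fix t assume "t \<in> {\<theta> \<bullet> z |z. nrm z \<le> 1}"
      then obtain z where z: "t = \<theta> \<bullet> z" "nrm z \<le> 1" by auto
      have "norm z \<le> 1 / c" using c z(2) by (smt (verit) mult.commute pos_le_divide_eq)
      have "t \<le> norm \<theta> * norm z" using z(1) by (metis abs_le_iff norm_cauchy_schwarz)
      also have "\<dots> \<le> norm \<theta> * (1/c)" using mult_left_mono[OF \<open>norm z \<le> 1/c\<close>, of "norm \<theta>"] by simp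
      finally show "t \<le> norm \<theta> / c" by simp
    qed
    have d0: "0 \<le> dual_norm nrm \<theta>" using up[of 0 \<theta>] isn_zero[OF n] by simp
    then show "0 \<le> dual_norm nrm \<theta>" .
    next
    fix \<theta> z :: 'a
    have d0: "0 \<le> dual_norm nrm \<theta>" using up[of 0 \<theta>] isn_zero[OF n] by simp
    show "\<bar>\<theta> \<bullet> z\<bar> \<le> dual_norm nrm \<theta> * nrm z"
    proof -
      show "\<bar>\<theta> \<bullet> z\<bar> \<le> dual_norm nrm \<theta> * nrm z"
      proof (cases "z = 0")
        case True then show ?thesis using d0 isn_zero[OF n] by simp
      next
        case False
        have np: "nrm z > 0" using n False unfolding is_norm_def by (metis less_eq_real_def)
        define w where "w = z /\<^sub>R nrm z"
        have nw: "nrm w = 1" "nrm (- w) = 1" using n np isn_neg[OF n] unfolding w_def is_norm_def by auto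
        have "\<theta> \<bullet> w \<le> dual_norm nrm \<theta>" "\<theta> \<bullet> (- w) \<le> dual_norm nrm \<theta>" using up[of w \<theta>] up[of "-w" \<theta>] nw by auto
        then have "\<bar>\<theta> \<bullet> w\<bar> \<le> dual_norm nrm \<theta>" by auto
        moreover have "\<theta> \<bullet> z = nrm z * (\<theta> \<bullet> w)" using np unfolding w_def by simp
        ultimately show ?thesis using np by (simp add: abs_mult mult.commute mult_left_mono)
      qed
    qed
  qed
qed


lemma aug_diff_norm: "norm (aug a - aug b) = norm (a - (b::real^'n::finite))"
proof -
  have "(aug a - aug b) \<bullet> (aug a - aug b) = (a - b) \<bullet> (a - b)"
    unfolding inner_vec_def UNIV_option_conv
    apply (simp add: aug_def sum.reindex inner_real_def)
    by (rule sum.cong) (auto simp: algebra_simps)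
  then show ?thesis by (simp add: norm_eq_sqrt_inner)
qed

lemma aug_nz: "aug b \<noteq> 0"
proof
  assume "aug b = 0"
  then have "aug b $ None = 0" by simp
  then show False by (simp add: aug_def)
qed

theorem theorem3p6:
  fixes nrm :: "real^('n::finite option) \<Rightarrow> real"
    and z :: "nat \<Rightarrow> real^('n option)"
    and N :: nat and R \<gamma> \<alpha> :: real
    and B :: "(real^'n) set"
    and \<beta>hat \<beta>star :: "real^'n"
  assumes norm: "is_norm nrm"
    and bound: "\<forall>i<N. nrm (z i) \<le> R"
    and gamma_pos: "\<gamma> > 0"
    and hat_feas: "\<beta>hat \<in> B" "l1_resid N z (aug \<beta>hat) \<le> \<gamma>"
    and hat_opt: "\<forall>\<beta>\<in>B. l1_resid N z (aug \<beta>) \<le> \<gamma> \<longrightarrow>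
                     dual_norm nrm (aug \<beta>hat) \<le> dual_norm nrm (aug \<beta>)"
    and star_feas: "\<beta>star \<in> B" "l1_resid N z (aug \<beta>star) \<le> \<gamma>"
    and alpha_pos: "\<alpha> > 0"
    and RE: "\<forall>v\<in>A_set nrm \<beta>star. gram_form N z v \<ge> \<alpha>"
  shows "norm (\<beta>hat - \<beta>star) \<le> 2 * R * \<gamma> / \<alpha> * Psi nrm \<beta>star"
proof -
  define dn where "dn = dual_norm nrm"
  obtain c where c: "c > 0" "\<And>\<theta>. dn \<theta> \<le> norm \<theta> / c" "\<And>\<theta>. 0 \<le> dn \<theta>"
    "\<And>\<theta> w. \<bar>\<theta> \<bullet> w\<bar> \<le> dn \<theta> * nrm w"
  proof -
    from dn_props[OF norm] obtain c where c0: "c > 0" and H: "\<forall>\<theta>. dual_norm nrm \<theta> \<le> norm \<theta> / c \<and> 0 \<le> dual_norm nrm \<theta> \<and>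
     (\<forall>z. \<bar>\<theta> \<bullet> z\<bar> \<le> dual_norm nrm \<theta> * nrm z)" by auto
    show ?thesis apply (rule that[OF c0]) using H unfolding dn_def by auto
  qed
  define a where "a = aug \<beta>star"
  define S where "S = {v. dn (a + v) \<le> dn a}"
  have A_eq: "A_set nrm \<beta>star = cone hull S \<inter> sphere 0 1"
    unfolding A_set_def S_def a_def dn_def by (rule refl)
  have inA: "v /\<^sub>R norm v \<in> A_set nrm \<beta>star" if "v \<in> S" "v \<noteq> 0" for v
  proof -
    have "v \<in> cone hull S" using that(1) hull_subset[of S cone] by (rule subsetD[rotated])
    then have "(1 / norm v) *\<^sub>R v \<in> cone hull S"
      using cone_cone_hull[of S] unfolding cone_def by (meson zero_le_divide_1_iff norm_ge_zero)
    then show ?thesis unfolding A_eq using that by (simp add: divide_inverse_commute)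
  qed
  have bddA: "bdd_above (dn ` A_set nrm \<beta>star)"
  proof (rule bdd_aboveI)
    fix t assume "t \<in> dn ` A_set nrm \<beta>star"
    then obtain u where "u \<in> A_set nrm \<beta>star" "t = dn u" by auto
    then show "t \<le> 1 / c" using c(2)[of u] unfolding A_eq by simp
  qed
  have PsiU: "dn u \<le> Psi nrm \<beta>star" if "u \<in> A_set nrm \<beta>star" for u
    unfolding Psi_def dn_def[symmetric] using cSup_upper[OF _ bddA] that by blast
  \<comment> \<open>nonemptiness gives N > 0, R \<ge> 0, Psi \<ge> 0\<close>
  have "dn 0 \<le> 0" using c(2)[of 0] by simp
  then have "- a \<in> S" unfolding S_def using c(3)[of a] by simp
  then have u0: "(- a) /\<^sub>R norm (- a) \<in> A_set nrm \<beta>star"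
    using inA[of "- a"] aug_nz[of \<beta>star] unfolding a_def by simp
  have "gram_form N z ((- a) /\<^sub>R norm (- a)) \<ge> \<alpha>" using RE u0 by blast
  then have "N > 0" using alpha_pos unfolding gram_form_def by (cases N) auto
  then have R0: "R \<ge> 0" using bound[rule_format, of 0] norm unfolding is_norm_def by (meson order_trans)
  have Psi0: "Psi nrm \<beta>star \<ge> 0" using PsiU[OF u0] c(3) by (meson order_trans)
  define v where "v = aug \<beta>hat - a"
  have nv: "norm v = norm (\<beta>hat - \<beta>star)" unfolding v_def a_def by (rule aug_diff_norm)
  show ?thesis
  proof (cases "v = 0")
    case True
    then show ?thesis using nv R0 Psi0 gamma_pos alpha_pos by simp
  next
    case False
    have vS: "v \<in> S" unfolding S_def v_def a_def dn_def using hat_opt star_feas by simp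
    define u where "u = v /\<^sub>R norm v"
    have uA: "u \<in> A_set nrm \<beta>star" using inA[OF vS False] u_def by simp
    have npos: "norm v > 0" using False by simp
    have l1v: "(\<Sum>i<N. \<bar>v \<bullet> z i\<bar>) \<le> 2 * \<gamma>"
    proof -
      have "(\<Sum>i<N. \<bar>v \<bullet> z i\<bar>) \<le> (\<Sum>i<N. \<bar>aug \<beta>hat \<bullet> z i\<bar> + \<bar>a \<bullet> z i\<bar>)"
        by (rule sum_mono) (simp add: v_def inner_diff_left)
      also have "\<dots> \<le> 2 * \<gamma>" using hat_feas(2) star_feas(2)
        unfolding l1_resid_def a_def sum.distrib by simp
      finally show ?thesis .
    qed
    have ui: "u \<bullet> z i = (v \<bullet> z i) / norm v" for i unfolding u_def by (simp add: divide_inverse_commute)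
    have ubd: "\<bar>u \<bullet> z i\<bar> \<le> dn u * R" if "i < N" for i
    proof -
      have "dn u * nrm (z i) \<le> dn u * R" using bound that c(3)[of u] by (simp add: mult_left_mono)
      then show ?thesis using c(4)[of u "z i"] by linarith
    qed
    have "\<alpha> \<le> gram_form N z u" using RE uA by (rule bspec)
    then have "\<alpha> \<le> (\<Sum>i<N. (u \<bullet> z i)^2)" unfolding gram_form_def .
    also have "\<dots> \<le> (\<Sum>i<N. \<bar>u \<bullet> z i\<bar> * (dn u * R))"
    proof (rule sum_mono)
      fix i assume "i \<in> {..<N}"
      then have "\<bar>u \<bullet> z i\<bar> \<le> dn u * R" using ubd by simp
      from mult_left_mono[OF this abs_ge_zero] have "\<bar>u \<bullet> z i\<bar> * \<bar>u \<bullet> z i\<bar> \<le> \<bar>u \<bullet> z i\<bar> * (dn u * R)" .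
      then show "(u \<bullet> z i)^2 \<le> \<bar>u \<bullet> z i\<bar> * (dn u * R)" by (simp add: power2_eq_square)
    qed
    also have "\<dots> = (dn u * R) / norm v * (\<Sum>i<N. \<bar>v \<bullet> z i\<bar>)"
      unfolding ui sum_distrib_left using npos by (simp add: field_simps)
    also have "\<dots> \<le> (dn u * R) / norm v * (2 * \<gamma>)"
      using l1v c(3)[of u] R0 npos by (intro mult_left_mono) auto
    finally have "\<alpha> \<le> dn u * R * 2 * \<gamma> / norm v" by simp
    then have "norm v \<le> 2 * R * \<gamma> / \<alpha> * dn u" using npos alpha_pos
      by (simp add: field_simps)
    also have "\<dots> \<le> 2 * R * \<gamma> / \<alpha> * Psi nrm \<beta>star"
      using PsiU[OF uA] R0 gamma_pos alpha_pos by (intro mult_left_mono) auto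
    finally show ?thesis using nv by simp
  qed
qed

end
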